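(* In the setting below, for $n$ participants, the protocol consisting of the setup phase, the merged round and the recovery round is correct, i.e. at the end every participant's balance is $0$ (and the shared address is empty), and, apart from the setup, it uses exactly $2\cdot n+1$ transactions.
   Context: Setting (Conspiracy Santa). There are $n$ participants $P_1,\dots,P_n$. For each participant, the other $n-1$ participants form a group, choose a gift for him, one or more of them buy it, and its value is shared equally among the group members (more generally, expenses are shared within exchange groups). All participants know a fixed integer upper bound $B>0$ (in cents) on the value of any gift. Setup phase: payments in each group are broadcast within the group; each member computes the in-group share (group total divided by group size); each participant sums his in-group shares and subtracts his own expenses, obtaining his balance $p_i$, an integer number of cents (shares may be unevenly split up to one cent). Thus $\sum_i p_i=0$; $p_i>0$ means $P_i$ owes money, $p_i<0$ means $P_i$ is owed money. Sending $x$ cents decreases the sender's balance by $x$ and increases the receiver's by $x$. Participants create anonymous cryptocurrency addresses and one shared anonymous address (piggy bank) whose key all know. $x\bmod B\in\{0,\dots,B-1\}$. Merged round (private transactions on secure channels, except the last): $P_1$ samples $t_1$ uniformly in $\{0,\dots,B-1\}$, sets $p_1\leftarrow p_1-1-t_1$, sends $1+t_1$ cents to $P_2$, who adds it to $p_2$. For $i=2,\dots,n$: $P_i$ sets $t_i=(p_i-1)\bmod B$, sets $p_i\leftarrow p_i-1-t_i-(i-1)B$ and sends $1+t_i+(i-1)B$ cents to $P_{i+1}$ (where $P_{n+1}=P_1$), who adds it to his balance. Finally $P_1$ sends $nB$ cents to the shared address (a public transaction), updating his balance accordingly. Recovery round: every $P_i$ with $p_i<0$ makes, $-p_i/B$ times,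 the shared address pay $B$ cents to one of his own (distinct) anonymous addresses, then sets $p_i\leftarrow 0$.
   Formalization: The balances $p_i$ entering the merged round are arbitrary integers with $\sum_i p_i=0$ and each $p_i$ at most B, instead of balances computed by the setup phase with shares split unevenly up to one cent. Apart from conventions, each condition added here is assumed in the paper as well or is needed for the statement above to hold. *)

theory Defs
  imports Main
begin

text \<open>Participants are P_1,...,P_n, indexed by the naturals 1..n.  A state consists of
  the balances of the participants (in cents) and the content of the shared address
  (piggy bank).\<close>

type_synonym state = "(nat \<Rightarrow> int) \<times> int"

text \<open>Transactions: a private transfer from one participant to another, a deposit of a
  participant to the shared address (public), and a withdrawal from the shared address
  to an anonymous address of a participant.\<close>

datatype tx = Priv nat nat int | Deposit nat int | Withdraw nat int

fun apply_tx :: "tx \<Rightarrow> state \<Rightarrow> state" where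
  "apply_tx (Priv a b x) (p, s) =
     (let q = p(a := p a - x) in (q(b := q b + x), s))"
| "apply_tx (Deposit a x) (p, s) = (p(a := p a - x), s + x)"
| "apply_tx (Withdraw b x) (p, s) = (p(b := p b + x), s - x)"

definition run :: "tx list \<Rightarrow> state \<Rightarrow> state" where
  "run txs st = fold apply_tx txs st"

fun merged_loop :: "int \<Rightarrow> nat \<Rightarrow> nat \<Rightarrow> nat \<Rightarrow> state \<Rightarrow> tx list" where
  "merged_loop B n i 0 st = []"
| "merged_loop B n i (Suc k) st =
     (let t = (fst st i - 1) mod B;
          tr = Priv i (if i = n then 1 else i + 1) (1 + t + int (i - 1) * B)
      in tr # merged_loop B n (i + 1) k (apply_tx tr st))"

definition merged_round :: "int \<Rightarrow> nat \<Rightarrow> int \<Rightarrow> state \<Rightarrow> tx list" where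
  "merged_round B n t1 st =
     (let tr1 = Priv 1 2 (1 + t1)
      in tr1 # merged_loop B n 2 (n - 1) (apply_tx tr1 st) @ [Deposit 1 (int n * B)])"

definition recovery_round :: "int \<Rightarrow> nat \<Rightarrow> (nat \<Rightarrow> int) \<Rightarrow> tx list" where
  "recovery_round B n p =
     concat (map (\<lambda>i. if p i < 0 then replicate (nat ((- p i) div B)) (Withdraw i B) else [])
                 [1..<n + 1])"

text \<open>Whole protocol after the setup phase, starting from the setup balances p and an
  empty shared address; t1 is P_1's random choice.\<close>

definition protocol :: "int \<Rightarrow> nat \<Rightarrow> int \<Rightarrow> (nat \<Rightarrow> int) \<Rightarrow> tx list" where
  "protocol B n t1 p =
     (let txs1 = merged_round B n t1 (p, 0);
          st1 = run txs1 (p, 0)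
      in txs1 @ recovery_round B n (fst st1))"

end

theory Submission
  imports Defs
begin

fun Tseq :: "int \<Rightarrow> (nat \<Rightarrow> int) \<Rightarrow> int \<Rightarrow> nat \<Rightarrow> int" where
  "Tseq B p t1 0 = t1"
| "Tseq B p t1 (Suc i) = (if i = 0 then t1 else (p (Suc i) + Tseq B p t1 i) mod B)"

lemma run_cons: "run (x # xs) st = run xs (apply_tx x st)"
  by (simp add: run_def)

lemma run_append: "run (xs @ ys) st = run ys (run xs st)"
  by (simp add: run_def)

lemma run_nil: "run [] st = st"
  by (simp add: run_def)

lemma Tseq_step: "2 \<le> i \<Longrightarrow> Tseq B p t1 i = (p i + Tseq B p t1 (i - 1)) mod B"
  by (cases i) auto

lemma loop:
  assumes "2 \<le> i" "i + k = n + 1" "i \<le> n"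
    "fst st i = p i + 1 + Tseq B p t1 (i-1) + int (i-2) * B"
    "\<forall>j. i < j \<and> j \<le> n \<longrightarrow> fst st j = p j"
  shows "run (merged_loop B n i k st) st =
    ((\<lambda>j. if i \<le> j \<and> j \<le> n then p j + Tseq B p t1 (j-1) - Tseq B p t1 j - B
          else if j = 1 then fst st 1 + 1 + Tseq B p t1 n + int (n-1) * B else fst st j), snd st)"
  using assms
proof (induction k arbitrary: i st)
  case 0
  then show ?case by simp
next
  case (Suc k)
  obtain q s where st: "st = (q, s)" by force
  have ti: "(fst st i - 1) mod B = Tseq B p t1 i"
  proof -
    have e: "fst st i - 1 = p i + Tseq B p t1 (i-1) + int (i-2) * B"
      using Suc.prems(4) by simp
    have "(fst st i - 1) mod B = (p i + Tseq B p t1 (i-1) + int (i-2) * B) mod B"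
      unfolding e ..
    also have "\<dots> = (p i + Tseq B p t1 (i-1)) mod B" by (rule mod_mult_self1)
    also have "\<dots> = Tseq B p t1 i" using Tseq_step[OF Suc.prems(1)] by simp
    finally show ?thesis .
  qed
  show ?case
  proof (cases k)
    case 0
    then have iN: "i = n" using Suc.prems by simp
    have "merged_loop B n i (Suc k) st = [Priv i 1 (1 + Tseq B p t1 i + int (i - 1) * B)]"
      using 0 iN ti by (simp add: Let_def)
    then show ?thesis using st iN Suc.prems
      by (auto simp: run_cons run_nil fun_eq_iff Let_def algebra_simps of_nat_diff)
  next
    case (Suc k')
    then have iN: "i < n" using Suc.prems by simp
    define tr where "tr = Priv i (i + 1) (1 + Tseq B p t1 i + int (i - 1) * B)"
    have ml: "merged_loop B n i (Suc k) st = tr # merged_loop B n (i + 1) k (apply_tx tr st)"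
      using iN ti by (simp add: Let_def tr_def)
    define st' where "st' = apply_tx tr st"
    have st'e: "st' = (q(i := q i - (1 + Tseq B p t1 i + int (i - 1) * B),
         i + 1 := q (i + 1) + (1 + Tseq B p t1 i + int (i - 1) * B)), s)"
      by (simp add: st'_def tr_def st Let_def)
    have q1: "q (i+1) = p (i+1)" using Suc.prems(5) iN st by simp
    have IH: "run (merged_loop B n (i+1) k st') st' =
      ((\<lambda>j. if i + 1 \<le> j \<and> j \<le> n then p j + Tseq B p t1 (j-1) - Tseq B p t1 j - B
          else if j = 1 then fst st' 1 + 1 + Tseq B p t1 n + int (n-1) * B else fst st' j), snd st')"
    proof (rule Suc.IH)
      show "2 \<le> i + 1" using Suc.prems by simp
      show "i + 1 + k = n + 1" using Suc.prems by simp
      show "i + 1 \<le> n" using iN by simp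
      show "fst st' (i + 1) = p (i + 1) + 1 + Tseq B p t1 (i + 1 - 1) + int (i + 1 - 2) * B"
        using st'e q1 Suc.prems(1) by (simp add: of_nat_diff)
      show "\<forall>j. i + 1 < j \<and> j \<le> n \<longrightarrow> fst st' j = p j"
        using st'e Suc.prems(5) st by auto
    qed
    have qi: "q i = p i + 1 + Tseq B p t1 (i-1) + int (i-2) * B" using Suc.prems(4) st by simp
    show ?thesis
      unfolding ml run_cons st'_def[symmetric] IH
      using st'e st qi Suc.prems(1) iN
      by (auto simp: fun_eq_iff algebra_simps of_nat_diff)
  qed
qed


lemma len_loop: "length (merged_loop B n i k st) = k"
  by (induction k arbitrary: i st) (simp_all add: Let_def)

lemma run_repl: "run (replicate m (Withdraw i B)) (q, s) = (q(i := q i + int m * B), s - int m * B)"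
proof (induction m arbitrary: q s)
  case 0
  then show ?case by (simp add: run_nil fun_eq_iff)
next
  case (Suc m)
  show ?case by (simp add: run_cons Suc.IH fun_eq_iff algebra_simps)
qed

lemma rec_run:
  assumes "0 < B"
  shows "run (concat (map (\<lambda>i. if F i < 0 then replicate (nat ((- F i) div B)) (Withdraw i B) else []) xs)) (q, s)
   = ((\<lambda>j. q j + (\<Sum>i\<leftarrow>xs. if i = j \<and> F i < 0 then (- F i) div B else 0) * B),
      s - (\<Sum>i\<leftarrow>xs. if F i < 0 then (- F i) div B else 0) * B)"
proof (induction xs arbitrary: q s)
  case Nil
  then show ?case by (simp add: run_nil)
next
  case (Cons a xs)
  have nn: "F a < 0 \<Longrightarrow> int (nat ((- F a) div B)) = (- F a) div B"
  proof -
    assume "F a < 0"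
    then have "0 \<le> - F a" by simp
    then have "0 \<le> (- F a) div B" using assms by (rule pos_imp_zdiv_nonneg_iff[THEN iffD2, rotated])
    then show ?thesis by simp
  qed
  show ?case
  proof (cases "F a < 0")
    case True
    have "0 \<le> - F a" using True by simp
    then have nn2: "0 \<le> (- F a) div B" using assms by (rule pos_imp_zdiv_nonneg_iff[THEN iffD2, rotated])
    show ?thesis using True nn2
      by (simp add: run_append run_repl Cons.IH fun_eq_iff algebra_simps)
  next
    case False
    then show ?thesis
      by (simp add: run_append Cons.IH fun_eq_iff algebra_simps)
  qed
qed

lemma Tseq_range:
  assumes "0 \<le> t1" "t1 < B"
  shows "0 \<le> Tseq B p t1 j \<and> Tseq B p t1 j < B"
  using assms by (induction j) auto

lemma telesc:
  fixes m :: nat and T :: "nat \<Rightarrow> int"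
  shows "1 \<le> m \<Longrightarrow> (\<Sum>j = 2..m. T (j - 1) - T j) = (T 1 - T m :: int)"
proof (induction m)
  case 0
  then show ?case by simp
next
  case (Suc m)
  show ?case
  proof (cases "m = 0")
    case True
    then show ?thesis by simp
  next
    case False
    then have "(\<Sum>j = 2..Suc m. T (j - 1) - T j) = (\<Sum>j = 2..m. T (j - 1) - T j) + (T m - T (Suc m))"
      by (simp add: sum.atLeast_Suc_atMost_Suc_shift)
    then show ?thesis using Suc False by simp
  qed
qed

theorem theorem4:
  fixes n :: nat and B t1 :: int and p :: "nat \<Rightarrow> int"
  assumes "2 \<le> n" and "0 < B"
    and "(\<Sum>i = 1..n. p i) = 0"
    and "\<forall>i \<in> {1..n}. p i \<le> B"
    and "t1 \<in> {0..<B}"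
  shows "(\<forall>i \<in> {1..n}. fst (run (protocol B n t1 p) (p, 0)) i = 0)
       \<and> snd (run (protocol B n t1 p) (p, 0)) = 0
       \<and> length (protocol B n t1 p) = 2 * n + 1"
proof -
  define T where "T = Tseq B p t1"
  have Tr: "\<And>j. 0 \<le> T j \<and> T j < B" using Tseq_range assms(5) unfolding T_def by auto
  have T1: "T 1 = t1" by (simp add: T_def)
  define F where "F = (\<lambda>j. if 2 \<le> j \<and> j \<le> n then p j + T (j-1) - T j - B
          else if j = 1 then p 1 - t1 + T n - B else p j)"
  define tr1 where "tr1 = Priv 1 2 (1 + t1)"
  define sta where "sta = apply_tx tr1 (p, 0)"
  have stae: "sta = (p(1 := p 1 - (1 + t1), 2 := p 2 + (1 + t1)), 0)"
    by (simp add: sta_def tr1_def)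
  have L: "run (merged_loop B n 2 (n - 1) sta) sta =
    ((\<lambda>j. if 2 \<le> j \<and> j \<le> n then p j + T (j-1) - T j - B
          else if j = 1 then fst sta 1 + 1 + T n + int (n-1) * B else fst sta j), snd sta)"
    unfolding T_def
  proof (rule loop)
    show "2 + (n - 1) = n + 1" using assms(1) by simp
    show "fst sta 2 = p 2 + 1 + Tseq B p t1 (2 - 1) + int (2 - 2) * B" using stae by simp
    show "\<forall>j. 2 < j \<and> j \<le> n \<longrightarrow> fst sta j = p j" using stae by simp
  qed (use assms(1) in auto)
  have MR: "run (merged_round B n t1 (p, 0)) (p, 0) = (F, int n * B)"
    unfolding merged_round_def Let_def tr1_def[symmetric] run_cons sta_def[symmetric] run_append L
    using stae assms(1)
    by (auto simp: run_cons run_nil F_def fun_eq_iff algebra_simps of_nat_diff)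
  have Fdvd2: "B dvd F j" if "2 \<le> j" "j \<le> n" for j
  proof -
    have Tj: "T j = (p j + T (j - 1)) mod B" using Tseq_step[OF that(1)] by (simp add: T_def)
    have "F j = (p j + T (j - 1)) - (p j + T (j - 1)) mod B - B"
      using that Tj by (simp add: F_def)
    also have "\<dots> = B * ((p j + T (j - 1)) div B) - B" by (simp add: minus_mod_eq_mult_div)
    finally show ?thesis by simp
  qed
  have sum2: "(\<Sum>j = 2..n. F j) = (\<Sum>j = 2..n. p j) + (T 1 - T n) - int (n - 1) * B"
  proof -
    have "(\<Sum>j = 2..n. F j) = (\<Sum>j = 2..n. p j + (T (j-1) - T j) - B)"
      by (rule sum.cong) (auto simp: F_def)
    also have "\<dots> = (\<Sum>j = 2..n. p j) + (\<Sum>j = 2..n. T (j-1) - T j) - (\<Sum>j = 2..n. B)"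
      by (simp add: sum.distrib sum_subtractf)
    also have "\<dots> = (\<Sum>j = 2..n. p j) + (T 1 - T n) - int (n - 1) * B"
      using telesc[of n T] assms(1) by simp
    finally show ?thesis .
  qed
  have split: "\<And>f :: nat \<Rightarrow> int. (\<Sum>j = 1..n. f j) = f 1 + (\<Sum>j = 2..n. f j)"
  proof -
    fix f :: "nat \<Rightarrow> int"
    have "(\<Sum>j = 1..n. f j) = f 1 + (\<Sum>j = Suc 1..n. f j)"
      using assms(1) by (subst sum.atLeast_Suc_atMost) auto
    then show "(\<Sum>j = 1..n. f j) = f 1 + (\<Sum>j = 2..n. f j)" by (simp add: numeral_2_eq_2)
  qed
  have sumF: "(\<Sum>j = 1..n. F j) = - (int n * B)"
  proof -
    have "(\<Sum>j = 1..n. F j) = F 1 + (\<Sum>j = 2..n. F j)" by (rule split)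
    also have "\<dots> = (p 1 + (\<Sum>j = 2..n. p j)) - int n * B"
      unfolding sum2 using T1 assms(1) by (simp add: F_def algebra_simps of_nat_diff)
    also have "\<dots> = - (int n * B)" using assms(3) split[of p] by simp
    finally show ?thesis .
  qed
  have Fdvd: "B dvd F j" if "j \<in> {1..n}" for j
  proof (cases "j = 1")
    case True
    have "F 1 = - (int n * B) - (\<Sum>j = 2..n. F j)" using sumF split[of F] by simp
    moreover have "B dvd (\<Sum>j = 2..n. F j)" by (rule dvd_sum) (use Fdvd2 in auto)
    ultimately show ?thesis using True by simp
  next
    case False
    then show ?thesis using that Fdvd2 by auto
  qed
  have Flt: "F j < B" if "j \<in> {1..n}" for j
  proof (cases "j = 1")
    case True
    have "p 1 \<le> B" using assms(1,4) by auto
    then show ?thesis using Tr[of n] assms(5) True by (auto simp: F_def)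
  next
    case False
    have "p j \<le> B" using assms(4) that by auto
    then show ?thesis using Tr[of j] Tr[of "j-1"] False that by (auto simp: F_def)
  qed
  have Fle: "F j \<le> 0" if jn: "j \<in> {1..n}" for j
  proof -
    obtain c where c: "F j = B * c" using Fdvd[OF jn] by auto
    have "B * c < B * 1" using Flt[OF jn] c by simp
    then have "c < 1" using assms(2) mult_less_cancel_left_pos by blast
    then have "c \<le> 0" by simp
    then show ?thesis using c assms(2) by (simp add: mult_nonneg_nonpos)
  qed
  have Fw: "(if F j < 0 then (- F j) div B else 0) * B = - F j" if "j \<in> {1..n}" for j
    using Fdvd[OF that] Fle[OF that] by auto
  define xs where "xs = [1..<n + 1]"
  have dxs: "distinct xs" and sxs: "set xs = {1..n}" by (auto simp: xs_def)
  have RR: "recovery_round B n F = concat (map (\<lambda>i. if F i < 0 then replicate (nat ((- F i) div B)) (Withdraw i B) else []) xs)"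
    by (simp add: recovery_round_def xs_def)
  have prot: "protocol B n t1 p = merged_round B n t1 (p, 0) @ recovery_round B n F"
    by (simp add: protocol_def Let_def MR)
  have fin: "run (protocol B n t1 p) (p, 0) = ((\<lambda>j. F j + (\<Sum>i\<leftarrow>xs. if i = j \<and> F i < 0 then (- F i) div B else 0) * B),
      int n * B - (\<Sum>i\<leftarrow>xs. if F i < 0 then (- F i) div B else 0) * B)"
    unfolding prot run_append MR RR by (rule rec_run[OF assms(2)])
  have c1: "\<forall>i \<in> {1..n}. fst (run (protocol B n t1 p) (p, 0)) i = 0"
  proof
    fix j assume j: "j \<in> {1..n}"
    have "(\<Sum>i\<leftarrow>xs. if i = j \<and> F i < 0 then (- F i) div B else 0)
        = (\<Sum>i\<in>{1..n}. if i = j \<and> F i < 0 then (- F i) div B else 0)"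
      using dxs sxs by (simp add: sum_list_distinct_conv_sum_set)
    also have "\<dots> = (if F j < 0 then (- F j) div B else 0)"
    proof -
      have "(\<Sum>i\<in>{1..n}. if i = j \<and> F i < 0 then (- F i) div B else 0)
          = (\<Sum>i\<in>{1..n}. if i = j then (if F j < 0 then (- F j) div B else 0) else 0)"
        by (rule sum.cong) auto
      also have "\<dots> = (if F j < 0 then (- F j) div B else 0)"
        using j by (simp only: sum.delta finite_atLeastAtMost) simp
      finally show ?thesis .
    qed
    finally show "fst (run (protocol B n t1 p) (p, 0)) j = 0"
      unfolding fin using Fw[OF j] by simp
  qed
  have S: "(\<Sum>i\<leftarrow>xs. if F i < 0 then (- F i) div B else 0) * B = int n * B"
  proof -
    have "(\<Sum>i\<leftarrow>xs. if F i < 0 then (- F i) div B else 0) * B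
        = (\<Sum>i\<in>{1..n}. (if F i < 0 then (- F i) div B else 0) * B)"
      using dxs sxs by (simp add: sum_list_distinct_conv_sum_set sum_distrib_right)
    also have "\<dots> = (\<Sum>i\<in>{1..n}. - F i)" by (rule sum.cong) (use Fw in auto)
    also have "\<dots> = int n * B" using sumF by (simp add: sum_negf)
    finally show ?thesis .
  qed
  have c2: "snd (run (protocol B n t1 p) (p, 0)) = 0" by (simp only: fin snd_conv S diff_self)
  have lenM: "length (merged_round B n t1 (p, 0)) = n + 1"
    using assms(1) by (simp add: merged_round_def Let_def len_loop)
  define g where "g = (\<lambda>i. if F i < 0 then replicate (nat ((- F i) div B)) (Withdraw i B) else [])"
  have gl: "int (length (g i)) = (if F i < 0 then (- F i) div B else 0)" for i
  proof (cases "F i < 0")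
    case True
    have "0 \<le> - F i" using True by simp
    then have "0 \<le> (- F i) div B" using assms(2) by (rule pos_imp_zdiv_nonneg_iff[THEN iffD2, rotated])
    then show ?thesis using True by (simp add: g_def)
  qed (simp add: g_def)
  have "int (length (recovery_round B n F)) = (\<Sum>i\<in>{1..n}. int (length (g i)))"
    unfolding RR g_def[symmetric] length_concat using dxs sxs
    by (simp add: sum_list_distinct_conv_sum_set of_nat_sum)
  also have "\<dots> = (\<Sum>i\<leftarrow>xs. if F i < 0 then (- F i) div B else 0)"
    using dxs sxs gl by (simp add: sum_list_distinct_conv_sum_set)
  also have "\<dots> = int n" using S assms(2) by simp
  finally have lenR: "length (recovery_round B n F) = n" by simp
  show ?thesis using c1 c2 lenR lenM prot by simp
qed

end
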